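(* If $\mathscr{S}$ is a relaxed scenario, then $G_{=}(\mathscr{S})$ is a perfect graph.
   Context: All trees are planted phylogenetic trees: a tree $T$ has a distinguished vertex $0_T$ of degree $1$ whose unique neighbor $\rho_T$ is the root, and every vertex other than $0_T$ and the leaves $L(T)$ has at least two children. For $x,y\in V(T)$ write $y\preceq_T x$ if $x$ lies on the path from $0_T$ to $y$; edges are written $uv$ with $v\prec_T u$. $\mathrm{lca}_T$ denotes the last common ancestor. A time map for $T$ is $\tau_T\colon V(T)\to\mathbb{R}$ with $\tau_T(x)<\tau_T(y)$ whenever $x\prec_T y$. A relaxed scenario $\mathscr{S}=(T,S,\sigma,\mu,\tau_T,\tau_S)$ consists of a gene tree $T$ with time map $\tau_T$, a species tree $S$ with time map $\tau_S$, a map $\sigma\colon L(T)\to M$ with $M\subseteq L(S)$, and a map $\mu\colon V(T)\to V(S)\cup E(S)$ such that (S0) $\mu(x)=0_S$ iff $x=0_T$; (S1) $\mu(x)\in L(S)$ iff $x\in L(T)$, in which case $\mu(x)=\sigma(x)$; (S2) if $\mu(x)\in V(S)$ then $\tau_S(\mu(x))=\tau_T(x)$; (S3) if $\mu(x)=uv\in E(S)$ then $\tau_S(v)<\tau_T(x)<\tau_S(u)$. The EDT graph $G_{=}(\mathscr{S})$ has vertex set $L(T)$ and an edge $xy$ ($x\ne y$) iff $\tau_T(\mathrm{lca}_T(x,y))=\tau_S(\mathrm{lca}_S(\sigma(x),\sigma(y)))$. *)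

theory Defs
  imports Main "HOL.Real"
begin

text \<open>A tree is given by a vertex set V, a set E of directed edges (u,v) with v a child
of u, and the planting vertex r (= 0_T).\<close>

definition children :: "('a \<times> 'a) set \<Rightarrow> 'a \<Rightarrow> 'a set" where
  "children E u = {v. (u, v) \<in> E}"

definition leaves :: "'a set \<Rightarrow> ('a \<times> 'a) set \<Rightarrow> 'a set" where
  "leaves V E = {v \<in> V. children E v = {}}"

definition planted_phylo_tree :: "'a set \<Rightarrow> ('a \<times> 'a) set \<Rightarrow> 'a \<Rightarrow> bool" where
  "planted_phylo_tree V E r \<longleftrightarrow>
     finite V \<and> r \<in> V \<and> E \<subseteq> V \<times> V \<and>
     (\<forall>u. (u, r) \<notin> E) \<and>
     (\<forall>v\<in>V. v \<noteq> r \<longrightarrow> (\<exists>!u. (u, v) \<in> E)) \<and>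
     (\<forall>v\<in>V. (r, v) \<in> E\<^sup>*) \<and>
     card (children E r) = 1 \<and>
     (\<forall>v\<in>V. v \<noteq> r \<and> v \<notin> leaves V E \<longrightarrow> card (children E v) \<ge> 2)"

text \<open>y \<preceq> x  iff x lies on the path from the planting vertex to y.\<close>
definition anc_le :: "('a \<times> 'a) set \<Rightarrow> 'a \<Rightarrow> 'a \<Rightarrow> bool" where
  "anc_le E y x \<longleftrightarrow> (x, y) \<in> E\<^sup>*"

definition anc_less :: "('a \<times> 'a) set \<Rightarrow> 'a \<Rightarrow> 'a \<Rightarrow> bool" where
  "anc_less E y x \<longleftrightarrow> (x, y) \<in> E\<^sup>+"

definition lca :: "'a set \<Rightarrow> ('a \<times> 'a) set \<Rightarrow> 'a \<Rightarrow> 'a \<Rightarrow> 'a" where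
  "lca V E x y = (THE z. z \<in> V \<and> anc_le E x z \<and> anc_le E y z \<and>
       (\<forall>w\<in>V. anc_le E x w \<and> anc_le E y w \<longrightarrow> anc_le E z w))"

definition time_map :: "'a set \<Rightarrow> ('a \<times> 'a) set \<Rightarrow> ('a \<Rightarrow> real) \<Rightarrow> bool" where
  "time_map V E \<tau> \<longleftrightarrow> (\<forall>x\<in>V. \<forall>y\<in>V. anc_less E x y \<longrightarrow> \<tau> x < \<tau> y)"

text \<open>mu maps gene-tree vertices to species-tree vertices (Inl v) or edges (Inr (u,v)).\<close>

definition relaxed_scenario ::
  "'a set \<Rightarrow> ('a \<times> 'a) set \<Rightarrow> 'a \<Rightarrow> 'b set \<Rightarrow> ('b \<times> 'b) set \<Rightarrow> 'b \<Rightarrow>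
   ('a \<Rightarrow> 'b) \<Rightarrow> ('a \<Rightarrow> 'b + ('b \<times> 'b)) \<Rightarrow> ('a \<Rightarrow> real) \<Rightarrow> ('b \<Rightarrow> real) \<Rightarrow> bool" where
  "relaxed_scenario VT ET rT VS ES rS \<sigma> \<mu> \<tau>T \<tau>S \<longleftrightarrow>
     planted_phylo_tree VT ET rT \<and> planted_phylo_tree VS ES rS \<and>
     time_map VT ET \<tau>T \<and> time_map VS ES \<tau>S \<and>
     (\<forall>x\<in>leaves VT ET. \<sigma> x \<in> leaves VS ES) \<and>
     (\<forall>x\<in>VT. \<mu> x \<in> Inl ` VS \<union> Inr ` ES) \<and>
     (\<forall>x\<in>VT. \<mu> x = Inl rS \<longleftrightarrow> x = rT) \<and>
     (\<forall>x\<in>VT. (\<exists>v\<in>leaves VS ES. \<mu> x = Inl v) \<longleftrightarrow> x \<in> leaves VT ET) \<and>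
     (\<forall>x\<in>leaves VT ET. \<mu> x = Inl (\<sigma> x)) \<and>
     (\<forall>x\<in>VT. \<forall>v. \<mu> x = Inl v \<longrightarrow> \<tau>S v = \<tau>T x) \<and>
     (\<forall>x\<in>VT. \<forall>u v. \<mu> x = Inr (u, v) \<longrightarrow> \<tau>S v < \<tau>T x \<and> \<tau>T x < \<tau>S u)"

definition edt_adj ::
  "'a set \<Rightarrow> ('a \<times> 'a) set \<Rightarrow> 'b set \<Rightarrow> ('b \<times> 'b) set \<Rightarrow>
   ('a \<Rightarrow> 'b) \<Rightarrow> ('a \<Rightarrow> real) \<Rightarrow> ('b \<Rightarrow> real) \<Rightarrow> 'a \<Rightarrow> 'a \<Rightarrow> bool" where
  "edt_adj VT ET VS ES \<sigma> \<tau>T \<tau>S x y \<longleftrightarrow>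
     x \<noteq> y \<and> \<tau>T (lca VT ET x y) = \<tau>S (lca VS ES (\<sigma> x) (\<sigma> y))"

text \<open>A (finite, simple) graph is given by a vertex set V and a symmetric adjacency predicate.\<close>

definition is_clique :: "'a set \<Rightarrow> ('a \<Rightarrow> 'a \<Rightarrow> bool) \<Rightarrow> 'a set \<Rightarrow> bool" where
  "is_clique V adj C \<longleftrightarrow> C \<subseteq> V \<and> (\<forall>x\<in>C. \<forall>y\<in>C. x \<noteq> y \<longrightarrow> adj x y)"

definition clique_number :: "'a set \<Rightarrow> ('a \<Rightarrow> 'a \<Rightarrow> bool) \<Rightarrow> nat" where
  "clique_number V adj = Max {card C | C. is_clique V adj C}"

definition is_colouring :: "'a set \<Rightarrow> ('a \<Rightarrow> 'a \<Rightarrow> bool) \<Rightarrow> nat \<Rightarrow> ('a \<Rightarrow> nat) \<Rightarrow> bool" where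
  "is_colouring V adj k f \<longleftrightarrow>
     (\<forall>x\<in>V. f x < k) \<and> (\<forall>x\<in>V. \<forall>y\<in>V. x \<noteq> y \<and> adj x y \<longrightarrow> f x \<noteq> f y)"

definition chromatic_number :: "'a set \<Rightarrow> ('a \<Rightarrow> 'a \<Rightarrow> bool) \<Rightarrow> nat" where
  "chromatic_number V adj = (LEAST k. \<exists>f. is_colouring V adj k f)"

definition perfect_graph :: "'a set \<Rightarrow> ('a \<Rightarrow> 'a \<Rightarrow> bool) \<Rightarrow> bool" where
  "perfect_graph V adj \<longleftrightarrow>
     finite V \<and> (\<forall>W\<subseteq>V. chromatic_number W adj = clique_number W adj)"

end

theory Submission
  imports Defs
begin

definition is_matching :: "('r \<times> 'c) set \<Rightarrow> ('r \<times> 'c) set \<Rightarrow> bool" where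
  "is_matching E M \<longleftrightarrow> M \<subseteq> E \<and> (\<forall>e\<in>M. \<forall>e'\<in>M. (fst e = fst e') = (snd e = snd e'))"

definition inc :: "'r + 'c \<Rightarrow> 'r \<times> 'c \<Rightarrow> bool" where
  "inc v e = (case v of Inl a \<Rightarrow> fst e = a | Inr b \<Rightarrow> snd e = b)"

lemma matching_finite_set:
  assumes "finite E" shows "finite {M. is_matching E M}"
  using assms unfolding is_matching_def
  by (rule finite_subset[rotated, OF finite_Pow_iff[THEN iffD2]]) auto

lemma matching_le_Max:
  fixes w :: "'r \<times> 'c \<Rightarrow> nat"
  assumes "finite E" "is_matching E M"
  shows "sum w M \<le> Max (sum w ` {M. is_matching E M})"
  using assms matching_finite_set[OF assms(1)] by (intro Max_ge) auto

lemma matching_hit: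
  fixes w :: "'r \<times> 'c \<Rightarrow> nat"
  assumes fin: "finite E" and ne: "E \<noteq> {}" and pos: "\<forall>e\<in>E. w e > 0"
  defines "\<nu> \<equiv> Max (sum w ` {M. is_matching E M})"
  shows "\<exists>v. \<forall>M. is_matching E M \<and> sum w M = \<nu> \<longrightarrow> (\<exists>e\<in>M. inc v e)"
proof (rule ccontr)
  assume "\<not> ?thesis"
  hence nh: "\<forall>v. \<exists>M. is_matching E M \<and> sum w M = \<nu> \<and> (\<forall>e\<in>M. \<not> inc v e)" by blast
  from ne obtain i j where ij: "(i, j) \<in> E" by auto
  from nh[rule_format, of "Inl i"] obtain Mi where
    Mi: "is_matching E Mi" "sum w Mi = \<nu>" "\<forall>e\<in>Mi. fst e \<noteq> i" by (auto simp: inc_def)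
  from nh[rule_format, of "Inr j"] obtain Mj where
    Mj: "is_matching E Mj" "sum w Mj = \<nu>" "\<forall>e\<in>Mj. snd e \<noteq> j" by (auto simp: inc_def)
  have finMi: "finite Mi" using Mi(1) fin unfolding is_matching_def by (auto intro: finite_subset)
  have finMj: "finite Mj" using Mj(1) fin unfolding is_matching_def by (auto intro: finite_subset)
  have mi: "\<And>a b a' b'. (a,b) \<in> Mi \<Longrightarrow> (a',b') \<in> Mi \<Longrightarrow> (a = a') = (b = b')"
    using Mi(1) unfolding is_matching_def by fastforce
  have mj: "\<And>a b a' b'. (a,b) \<in> Mj \<Longrightarrow> (a',b') \<in> Mj \<Longrightarrow> (a = a') = (b = b')"
    using Mj(1) unfolding is_matching_def by fastforce
  define R where "R = {(Inl a, Inr b) | a b. (a,b) \<in> Mj - Mi} \<union> {(Inr b, Inl a) | a b. (a,b) \<in> Mi - Mj}"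
  define X where "X = {v. (Inl i, v) \<in> R\<^sup>*}"
  define P where "P = {e \<in> Mj - Mi. Inl (fst e) \<in> X} \<union> {e \<in> Mi - Mj. Inr (snd e) \<in> X}"
  have iX: "Inl i \<in> X" unfolding X_def by auto
  have stepX: "v \<in> X \<Longrightarrow> (v, u) \<in> R \<Longrightarrow> u \<in> X" for u v
    unfolding X_def by (auto intro: rtrancl_into_rtrancl)
  have P1: "Inl a \<in> X \<and> Inr b \<in> X" if "(a,b) \<in> P" for a b
  proof -
    from that consider "(a,b) \<in> Mj - Mi" "Inl a \<in> X" | "(a,b) \<in> Mi - Mj" "Inr b \<in> X"
      unfolding P_def by auto
    then show ?thesis
    proof cases
      case 1 then show ?thesis using stepX[of "Inl a" "Inr b"] unfolding R_def by auto
    next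
      case 2 then show ?thesis using stepX[of "Inr b" "Inl a"] unfolding R_def by auto
    qed
  qed
  have P2: "Inl a \<in> X" if "(a,b) \<in> Mj - Mi" "Inr b \<in> X" for a b
  proof -
    from that(2) have "(Inl i, Inr b) \<in> R\<^sup>*" unfolding X_def by auto
    then obtain u where "(Inl i, u) \<in> R\<^sup>*" "(u, Inr b) \<in> R"
      by (cases rule: rtranclE) auto
    then obtain a' where "(a', b) \<in> Mj - Mi" "(Inl i, Inl a') \<in> R\<^sup>*"
      unfolding R_def by auto
    with that(1) mj have "a' = a" by blast
    with \<open>(Inl i, Inl a') \<in> R\<^sup>*\<close> show ?thesis unfolding X_def by auto
  qed
  have P3: "Inr b \<in> X" if "(a,b) \<in> Mi - Mj" "Inl a \<in> X" for a b
  proof -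
    from that(2) have "(Inl i, Inl a) \<in> R\<^sup>*" unfolding X_def by auto
    then show ?thesis
    proof (cases rule: rtranclE)
      case base then show ?thesis using that Mi(3) by auto
    next
      case (step u)
      then obtain b' where "(a, b') \<in> Mi - Mj" "(Inl i, Inr b') \<in> R\<^sup>*"
        unfolding R_def by auto
      with that(1) mi have "b' = b" by blast
      with \<open>(Inl i, Inr b') \<in> R\<^sup>*\<close> show ?thesis unfolding X_def by auto
    qed
  qed
  have P4: "Inr j \<notin> X"
  proof
    assume "Inr j \<in> X"
    hence "(Inl i, Inr j) \<in> R\<^sup>*" unfolding X_def by auto
    then obtain u where "(u, Inr j) \<in> R"
      by (cases rule: rtranclE) auto
    then show False using Mj(3) unfolding R_def by auto
  qed
  have PD: "P \<subseteq> (Mj - Mi) \<union> (Mi - Mj)" unfolding P_def by auto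
  define M1 where "M1 = (Mj - P) \<union> (P \<inter> Mi)"
  define M2 where "M2 = (Mi - P) \<union> (P \<inter> Mj)"
  have M1m: "is_matching E M1"
    unfolding is_matching_def
  proof safe
    show "x \<in> E" if "x \<in> M1" for x using that Mi(1) Mj(1) unfolding M1_def is_matching_def by auto
  next
    fix a b a' b'
    assume e1: "(a,b) \<in> M1" and e2: "(a',b') \<in> M1"
    have key: "(a = a') = (b = b')" if "(a,b) \<in> Mj - P" "(a',b') \<in> P \<inter> Mi" for a b a' b'
    proof -
      have x: "Inl a' \<in> X" "Inr b' \<in> X" using P1 that(2) by auto
      have nb: "(a',b') \<notin> Mj" using that(2) PD by auto
      show ?thesis
      proof (cases "(a,b) \<in> Mi")
        case True
        then have "(a = a') = (b = b')" using mi that(2) by blast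
        moreover have "(a,b) \<noteq> (a',b')" using True that nb by auto
        ultimately show ?thesis by auto
      next
        case False
        have "a \<noteq> a'" using x False that(1) unfolding P_def by auto
        moreover have "b \<noteq> b'" using x False that(1) P2[of a b] unfolding P_def by auto
        ultimately show ?thesis by auto
      qed
    qed
    from e1 e2 show "fst (a,b) = fst (a',b') \<Longrightarrow> snd (a,b) = snd (a',b')"
      and "snd (a,b) = snd (a',b') \<Longrightarrow> fst (a,b) = fst (a',b')"
      unfolding M1_def using key[of a b a' b'] key[of a' b' a b] mi[of a b a' b'] mj[of a b a' b']
      by auto
  qed
  have M2m: "is_matching E M2"
    unfolding is_matching_def
  proof safe
    show "x \<in> E" if "x \<in> M2" for x using that Mi(1) Mj(1) unfolding M2_def is_matching_def by auto
  next
    fix a b a' b'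
    assume e1: "(a,b) \<in> M2" and e2: "(a',b') \<in> M2"
    have key: "(a = a') = (b = b')" if "(a,b) \<in> Mi - P" "(a',b') \<in> P \<inter> Mj" for a b a' b'
    proof -
      have x: "Inl a' \<in> X" "Inr b' \<in> X" using P1 that(2) by auto
      have nb: "(a',b') \<notin> Mi" using that(2) PD by auto
      show ?thesis
      proof (cases "(a,b) \<in> Mj")
        case True
        then have "(a = a') = (b = b')" using mj that(2) by blast
        moreover have "(a,b) \<noteq> (a',b')" using True that nb by auto
        ultimately show ?thesis by auto
      next
        case False
        have "a \<noteq> a'" using x False that(1) P3[of a b] unfolding P_def by auto
        moreover have "b \<noteq> b'" using x False that(1) unfolding P_def by auto
        ultimately show ?thesis by auto
      qed
    qed
    from e1 e2 show "fst (a,b) = fst (a',b') \<Longrightarrow> snd (a,b) = snd (a',b')"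
      and "snd (a,b) = snd (a',b') \<Longrightarrow> fst (a,b) = fst (a',b')"
      unfolding M2_def using key[of a b a' b'] key[of a' b' a b] mi[of a b a' b'] mj[of a b a' b']
      by auto
  qed
  have finP: "finite P" using PD finMi finMj by (auto intro: finite_subset)
  have "sum w M1 + sum w M2 = sum w Mi + sum w Mj"
  proof -
    have "sum w M1 = sum w (Mj - P) + sum w (P \<inter> Mi)"
      unfolding M1_def by (rule sum.union_disjoint) (use finMj finP in auto)
    moreover have "sum w M2 = sum w (Mi - P) + sum w (P \<inter> Mj)"
      unfolding M2_def by (rule sum.union_disjoint) (use finMi finP in auto)
    moreover have "sum w Mj = sum w (Mj - P) + sum w (P \<inter> Mj)"
      using sum.union_disjoint[of "Mj - P" "P \<inter> Mj" w] finMj finP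
      by (metis Int_commute Un_Diff_Int Diff_disjoint Int_Diff_disjoint finite_Diff finite_Int inf_commute) 
    moreover have "sum w Mi = sum w (Mi - P) + sum w (P \<inter> Mi)"
      using sum.union_disjoint[of "Mi - P" "P \<inter> Mi" w] finMi finP
      by (metis Int_commute Un_Diff_Int Diff_disjoint Int_Diff_disjoint finite_Diff finite_Int inf_commute) 
    ultimately show ?thesis by simp
  qed
  moreover have "sum w M1 \<le> \<nu>" "sum w M2 \<le> \<nu>"
    unfolding \<nu>_def using matching_le_Max[OF fin] M1m M2m by auto
  ultimately have s1: "sum w M1 = \<nu>" using Mi(2) Mj(2) by linarith
  have noi: "\<forall>e\<in>M1. fst e \<noteq> i"
  proof
    fix e assume "e \<in> M1"
    then obtain a b where e: "e = (a,b)" "(a,b) \<in> M1" by (cases e) auto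
    show "fst e \<noteq> i"
    proof
      assume "fst e = i"
      hence ai: "a = i" using e by simp
      show False
      proof (cases "(a,b) \<in> Mi")
        case True then show False using Mi(3) ai by auto
      next
        case False
        then have "(a,b) \<in> Mj - P" using e unfolding M1_def by auto
        then show False using False iX ai unfolding P_def by auto
      qed
    qed
  qed
  have noj: "\<forall>e\<in>M1. snd e \<noteq> j"
  proof
    fix e assume "e \<in> M1"
    then obtain a b where e: "e = (a,b)" "(a,b) \<in> M1" by (cases e) auto
    show "snd e \<noteq> j"
    proof
      assume "snd e = j"
      hence bj: "b = j" using e by simp
      show False
      proof (cases "(a,b) \<in> Mj")
        case True then show False using Mj(3) bj e unfolding M1_def by auto
      next
        case False
        then have "(a,b) \<in> P" using e unfolding M1_def by auto
        then show False using P1 P4 bj by auto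
      qed
    qed
  qed
  define M3 where "M3 = insert (i,j) M1"
  have M3m: "is_matching E M3"
    using M1m ij noi noj unfolding M3_def is_matching_def by fastforce
  have finM1: "finite M1" using M1m fin unfolding is_matching_def by (auto intro: finite_subset)
  have "(i,j) \<notin> M1" using noi by auto
  hence "sum w M3 = w (i,j) + sum w M1" unfolding M3_def using finM1 by simp
  also have "\<dots> > \<nu>" using s1 pos ij by auto
  finally have "sum w M3 > \<nu>" .
  moreover have "sum w M3 \<le> \<nu>" unfolding \<nu>_def by (rule matching_le_Max[OF fin M3m])
  ultimately show False by simp
qed


lemma tree_chain:
  assumes T: "planted_phylo_tree V E r"
  shows "(a, v) \<in> E\<^sup>* \<Longrightarrow> (b, v) \<in> E\<^sup>* \<Longrightarrow> (a, b) \<in> E\<^sup>* \<or> (b, a) \<in> E\<^sup>*"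
proof (induction arbitrary: b rule: rtrancl_induct)
  case base then show ?case by auto
next
  case (step u v)
  from step.prems show ?case
  proof (cases rule: rtranclE)
    case base then show ?thesis using step.hyps by auto
  next
    case (step u')
    have "v \<in> V" "v \<noteq> r" using T \<open>(u,v) \<in> E\<close> unfolding planted_phylo_tree_def by auto
    hence "u' = u" using T \<open>(u,v) \<in> E\<close> \<open>(u',v) \<in> E\<close> unfolding planted_phylo_tree_def by blast
    then show ?thesis using step.IH \<open>(b,u') \<in> E\<^sup>*\<close> by auto
  qed
qed

lemma anc_in_V:
  assumes T: "planted_phylo_tree V E r" and "(z, x) \<in> E\<^sup>*" "x \<in> V"
  shows "z \<in> V"
  using assms(2)
proof (cases rule: converse_rtranclE)
  case base then show ?thesis using assms by simp
next
  case (step z') then show ?thesis using T unfolding planted_phylo_tree_def by auto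
qed

lemma time_mono:
  assumes tm: "time_map V E \<tau>" and "x \<in> V" "y \<in> V" "(y, x) \<in> E\<^sup>*"
  shows "\<tau> x \<le> \<tau> y"
proof (cases "x = y")
  case False
  hence "(y, x) \<in> E\<^sup>+" using assms(4) by (simp add: rtrancl_eq_or_trancl)
  then show ?thesis using tm assms unfolding time_map_def anc_less_def by fastforce
qed simp

lemma tree_antisym:
  assumes tm: "time_map V E \<tau>" and "a \<in> V" "b \<in> V" "(a, b) \<in> E\<^sup>*" "(b, a) \<in> E\<^sup>*"
  shows "a = b"
proof (rule ccontr)
  assume "a \<noteq> b"
  hence "(a, b) \<in> E\<^sup>+" using assms(4) by (simp add: rtrancl_eq_or_trancl)
  hence "(a, a) \<in> E\<^sup>+" using assms(5) by (rule trancl_rtrancl_trancl)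
  then show False using tm assms(2) unfolding time_map_def anc_less_def by fastforce
qed

lemma lca_props:
  assumes T: "planted_phylo_tree V E r" and tm: "time_map V E \<tau>" and x: "x \<in> V" and y: "y \<in> V"
  shows "lca V E x y \<in> V \<and> (lca V E x y, x) \<in> E\<^sup>* \<and> (lca V E x y, y) \<in> E\<^sup>* \<and>
         (\<forall>w\<in>V. (w, x) \<in> E\<^sup>* \<and> (w, y) \<in> E\<^sup>* \<longrightarrow> (w, lca V E x y) \<in> E\<^sup>*)"
proof -
  define CA where "CA = {z \<in> V. (z, x) \<in> E\<^sup>* \<and> (z, y) \<in> E\<^sup>*}"
  have "r \<in> CA" using T x y unfolding CA_def planted_phylo_tree_def by auto
  moreover have "finite CA" using T unfolding CA_def planted_phylo_tree_def by auto
  ultimately obtain z where z: "z \<in> CA" "\<tau> z = Min (\<tau> ` CA)"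
    by (metis (mono_tags, lifting) Min_in empty_iff finite_imageI image_iff)
  have zmin: "(w, z) \<in> E\<^sup>*" if "w \<in> CA" for w
  proof -
    have "(w, z) \<in> E\<^sup>* \<or> (z, w) \<in> E\<^sup>*"
      using tree_chain[OF T] that z(1) unfolding CA_def by blast
    moreover have "\<not> (z, w) \<in> E\<^sup>+"
    proof
      assume "(z, w) \<in> E\<^sup>+"
      hence "\<tau> w < \<tau> z" using tm that z(1) unfolding time_map_def anc_less_def CA_def by auto
      moreover have "\<tau> z \<le> \<tau> w" using z that \<open>finite CA\<close> by auto
      ultimately show False by simp
    qed
    ultimately show ?thesis by (auto simp: rtrancl_eq_or_trancl)
  qed
  define Q where "Q = (\<lambda>z. z \<in> V \<and> anc_le E x z \<and> anc_le E y z \<and>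
       (\<forall>w\<in>V. anc_le E x w \<and> anc_le E y w \<longrightarrow> anc_le E z w))"
  have Qz: "Q z" using z(1) zmin unfolding Q_def CA_def anc_le_def by auto
  have uq: "z' = z" if "Q z'" for z'
    using that Qz tree_antisym[OF tm] unfolding Q_def anc_le_def by blast
  have "Q (lca V E x y)" unfolding lca_def Q_def[symmetric]
    using Qz uq by (rule theI)
  then show ?thesis unfolding Q_def anc_le_def by auto
qed

lemma lca_sym: "lca V E x y = lca V E y x"
  unfolding lca_def by (simp add: conj_commute conj_left_commute)

lemma lca_ultra:
  assumes T: "planted_phylo_tree V E r" and tm: "time_map V E \<tau>"
    and x: "x \<in> V" and y: "y \<in> V" and z: "z \<in> V"
  shows "\<tau> (lca V E x z) \<le> max (\<tau> (lca V E x y)) (\<tau> (lca V E y z))"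
proof -
  note Lxy = lca_props[OF T tm x y] and Lyz = lca_props[OF T tm y z] and Lxz = lca_props[OF T tm x z]
  have "(lca V E x y, lca V E y z) \<in> E\<^sup>* \<or> (lca V E y z, lca V E x y) \<in> E\<^sup>*"
    using tree_chain[OF T] Lxy Lyz by blast
  then show ?thesis
  proof
    assume h: "(lca V E x y, lca V E y z) \<in> E\<^sup>*"
    hence "(lca V E x y, lca V E x z) \<in> E\<^sup>*" using Lxy Lyz Lxz
      by (meson rtrancl_trans)
    hence "\<tau> (lca V E x z) \<le> \<tau> (lca V E x y)" using time_mono[OF tm] Lxy Lxz by blast
    then show ?thesis by simp
  next
    assume h: "(lca V E y z, lca V E x y) \<in> E\<^sup>*"
    hence "(lca V E y z, lca V E x z) \<in> E\<^sup>*" using Lxy Lyz Lxz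
      by (meson rtrancl_trans)
    hence "\<tau> (lca V E x z) \<le> \<tau> (lca V E y z)" using time_mono[OF tm] Lyz Lxz by blast
    then show ?thesis by simp
  qed
qed


locale ultra2 =
  fixes L :: "'a set" and d1 d2 :: "'a \<Rightarrow> 'a \<Rightarrow> real"
  assumes finL: "finite L"
    and sym1: "\<And>x y. x \<in> L \<Longrightarrow> y \<in> L \<Longrightarrow> d1 x y = d1 y x"
    and sym2: "\<And>x y. x \<in> L \<Longrightarrow> y \<in> L \<Longrightarrow> d2 x y = d2 y x"
    and ult1: "\<And>x y z. x \<in> L \<Longrightarrow> y \<in> L \<Longrightarrow> z \<in> L \<Longrightarrow> d1 x z \<le> max (d1 x y) (d1 y z)"
    and ult2: "\<And>x y z. x \<in> L \<Longrightarrow> y \<in> L \<Longrightarrow> z \<in> L \<Longrightarrow> d2 x z \<le> max (d2 x y) (d2 y z)"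
begin

definition adj :: "'a \<Rightarrow> 'a \<Rightarrow> bool" where
  "adj x y \<longleftrightarrow> x \<noteq> y \<and> d1 x y = d2 x y"

abbreviation om :: "'a set \<Rightarrow> nat" where
  "om W \<equiv> clique_number W adj"

definition indep :: "'a set \<Rightarrow> bool" where
  "indep I \<longleftrightarrow> (\<forall>x\<in>I. \<forall>y\<in>I. \<not> adj x y)"

lemma om_facts:
  assumes "finite W"
  shows "(\<exists>C. is_clique W adj C \<and> card C = om W) \<and> (\<forall>C. is_clique W adj C \<longrightarrow> card C \<le> om W)"
proof -
  have fin: "finite {card C | C. is_clique W adj C}"
  proof (rule finite_subset)
    show "{card C | C. is_clique W adj C} \<subseteq> card ` Pow W" unfolding is_clique_def by auto
  qed (use assms in auto)
  have ne: "{card C | C. is_clique W adj C} \<noteq> {}"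
    using is_clique_def by fastforce
  show ?thesis unfolding clique_number_def
    using Max_in[OF fin ne] Max_ge[OF fin] by auto
qed

lemma om_pos:
  assumes "finite W" "W \<noteq> {}" shows "om W \<ge> 1"
proof -
  obtain x where "x \<in> W" using assms by auto
  hence "is_clique W adj {x}" unfolding is_clique_def by auto
  then show ?thesis using om_facts[OF assms(1)] by fastforce
qed

lemma clique_sub: "is_clique W adj C \<Longrightarrow> C \<subseteq> W' \<Longrightarrow> is_clique W' adj C"
  unfolding is_clique_def by auto

lemma hit:
  assumes "W \<subseteq> L" "W \<noteq> {}"
  shows "\<exists>I\<subseteq>W. indep I \<and> (\<forall>C. is_clique W adj C \<and> card C = om W \<longrightarrow> C \<inter> I \<noteq> {})"
  using assms
proof (induction "card W" arbitrary: W rule: less_induct)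
  case less
  have finW: "finite W" using less.prems finL by (auto intro: finite_subset)
  show ?case
  proof (cases "\<forall>x\<in>W. \<forall>y\<in>W. x = y")
    case True
    have "indep W" using True unfolding indep_def adj_def by auto
    moreover have "C \<inter> W \<noteq> {}" if "is_clique W adj C" "card C = om W" for C
    proof -
      have "C \<noteq> {}" using that om_pos[OF finW less.prems(2)] by auto
      then show ?thesis using that(1) unfolding is_clique_def by auto
    qed
    ultimately show ?thesis by blast
  next
    case False
    then obtain x1 y1 where xy1: "x1 \<in> W" "y1 \<in> W" "x1 \<noteq> y1" by auto
    define D where "D = {max (d1 x y) (d2 x y) | x y. x \<in> W \<and> y \<in> W \<and> x \<noteq> y}"
    define t where "t = Max D"
    have finD: "finite D"
    proof -
      have "D \<subseteq> (\<lambda>(x,y). max (d1 x y) (d2 x y)) ` (W \<times> W)" unfolding D_def by auto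
      then show ?thesis using finW by (auto intro: finite_subset)
    qed
    have neD: "D \<noteq> {}" using xy1 unfolding D_def by auto
    have tge: "d1 x y \<le> t \<and> d2 x y \<le> t" if "x \<in> W" "y \<in> W" "x \<noteq> y" for x y
    proof -
      have "max (d1 x y) (d2 x y) \<in> D" using that unfolding D_def by auto
      then show ?thesis unfolding t_def using Max_ge[OF finD] by fastforce
    qed
    obtain x0 y0 where xy0: "x0 \<in> W" "y0 \<in> W" "x0 \<noteq> y0" "max (d1 x0 y0) (d2 x0 y0) = t"
      using Max_in[OF finD neD] unfolding t_def D_def by auto
    define r1 where "r1 x y \<longleftrightarrow> x = y \<or> d1 x y < t" for x y
    define r2 where "r2 x y \<longleftrightarrow> x = y \<or> d2 x y < t" for x y
    have WL: "x \<in> W \<Longrightarrow> x \<in> L" for x using less.prems by auto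
    have r1s: "r1 x y \<Longrightarrow> r1 y x" if "x \<in> W" "y \<in> W" for x y
      using sym1[OF WL WL] that unfolding r1_def by auto
    have r2s: "r2 x y \<Longrightarrow> r2 y x" if "x \<in> W" "y \<in> W" for x y
      using sym2[OF WL WL] that unfolding r2_def by auto
    have r1t: "r1 x y \<Longrightarrow> r1 y z \<Longrightarrow> r1 x z" if "x \<in> W" "y \<in> W" "z \<in> W" for x y z
      using ult1[OF WL WL WL, OF that] unfolding r1_def by (cases "x = y"; cases "y = z"; auto)
    have r2t: "r2 x y \<Longrightarrow> r2 y z \<Longrightarrow> r2 x z" if "x \<in> W" "y \<in> W" "z \<in> W" for x y z
      using ult2[OF WL WL WL, OF that] unfolding r2_def by (cases "x = y"; cases "y = z"; auto)
    have adjA: "adj x y" if "x \<in> W" "y \<in> W" "\<not> r1 x y" "\<not> r2 x y" for x y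
      using that tge[of x y] unfolding r1_def r2_def adj_def by auto
    have adjB: "\<not> adj x y" if "x \<in> W" "y \<in> W" "r1 x y \<noteq> r2 x y" for x y
      using that tge[of x y] unfolding r1_def r2_def adj_def by auto
    define row where "row x = {y \<in> W. r1 x y}" for x
    define col where "col x = {y \<in> W. r2 x y}" for x
    have rowe: "row x = row y \<longleftrightarrow> r1 x y" if "x \<in> W" "y \<in> W" for x y
    proof
      assume "row x = row y" then have "y \<in> row x" using that unfolding row_def r1_def by auto
      then show "r1 x y" unfolding row_def by auto
    next
      assume "r1 x y" then show "row x = row y" unfolding row_def using that r1s r1t by blast
    qed
    have cole: "col x = col y \<longleftrightarrow> r2 x y" if "x \<in> W" "y \<in> W" for x y
    proof
      assume "col x = col y" then have "y \<in> col x" using that unfolding col_def r2_def by auto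
      then show "r2 x y" unfolding col_def by auto
    next
      assume "r2 x y" then show "col x = col y" unfolding col_def using that r2s r2t by blast
    qed
    define f where "f x = (row x, col x)" for x
    define E where "E = f ` W"
    define cell where "cell e = fst e \<inter> snd e" for e :: "'a set \<times> 'a set"
    define w where "w e = om (cell e)" for e
    have cell_iff: "x \<in> cell e \<longleftrightarrow> f x = e" if H: "e \<in> E" "x \<in> W" for x e
    proof -
      obtain z where z: "z \<in> W" "e = f z" using H(1) unfolding E_def by blast
      have "x \<in> cell e \<longleftrightarrow> r1 z x \<and> r2 z x" using H z unfolding cell_def f_def row_def col_def by auto
      also have "\<dots> \<longleftrightarrow> row z = row x \<and> col z = col x" using rowe cole z H by auto
      finally show ?thesis using z unfolding f_def by auto
    qed
    have cellW: "cell e \<subseteq> W" if "e \<in> E" for e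
      using that unfolding E_def cell_def f_def row_def by auto
    have cellne: "cell e \<noteq> {}" if "e \<in> E" for e
      using that cell_iff cellW unfolding E_def by blast
    have celllt: "card (cell e) < card W" if "e \<in> E" for e
    proof -
      have "\<not> (x0 \<in> cell e \<and> y0 \<in> cell e)"
      proof
        assume "x0 \<in> cell e \<and> y0 \<in> cell e"
        hence "f x0 = f y0" using cell_iff that xy0 by auto
        hence "r1 x0 y0" "r2 x0 y0" using rowe cole xy0 unfolding f_def by auto
        then show False using xy0 unfolding r1_def r2_def by auto
      qed
      hence "cell e \<noteq> W" using xy0 by auto
      then show ?thesis using cellW[OF that] finW by (simp add: psubset_card_mono)
    qed
    have finE: "finite E" unfolding E_def using finW by simp
    have neE: "E \<noteq> {}" unfolding E_def using less.prems by simp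
    have posw: "\<forall>e\<in>E. w e > 0"
    proof
      fix e assume "e \<in> E"
      then show "w e > 0" unfolding w_def using om_pos[OF finite_subset[OF cellW finW] cellne] by fastforce
    qed
    have "\<forall>e\<in>E. \<exists>Ie. Ie \<subseteq> cell e \<and> indep Ie \<and>
        (\<forall>C. is_clique (cell e) adj C \<and> card C = om (cell e) \<longrightarrow> C \<inter> Ie \<noteq> {})"
      using less.hyps celllt cellW cellne less.prems(1) by (meson order_trans)
    then obtain Ie where Ie: "\<And>e. e \<in> E \<Longrightarrow> Ie e \<subseteq> cell e \<and> indep (Ie e) \<and>
        (\<forall>C. is_clique (cell e) adj C \<and> card C = om (cell e) \<longrightarrow> C \<inter> Ie e \<noteq> {})"
      by metis
    define \<nu> where "\<nu> = Max (sum w ` {M. is_matching E M})"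
    have finMs: "finite (sum w ` {M. is_matching E M})" using matching_finite_set[OF finE] by simp
    have cm: "is_matching E (f ` C)" if "is_clique W adj C" for C
    proof -
      have "(fst (f x) = fst (f y)) = (snd (f x) = snd (f y))" if "x \<in> C" "y \<in> C" for x y
      proof (cases "x = y")
        case False
        hence "adj x y" using \<open>is_clique W adj C\<close> that unfolding is_clique_def by auto
        hence "r1 x y = r2 x y" using adjB that \<open>is_clique W adj C\<close> unfolding is_clique_def by blast
        moreover have xW: "x \<in> W" "y \<in> W" using that \<open>is_clique W adj C\<close> unfolding is_clique_def by auto
        ultimately show ?thesis using rowe[OF xW] cole[OF xW] unfolding f_def by simp
      qed simp
      then show ?thesis using that unfolding is_matching_def E_def is_clique_def by auto
    qed
    have fib: "{x \<in> C. f x = e} = C \<inter> cell e" if "C \<subseteq> W" "e \<in> E" for C e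
      using cell_iff[OF that(2)] that(1) by blast
    have cardC: "card C = (\<Sum>e\<in>f ` C. card (C \<inter> cell e))" if "C \<subseteq> W" for C
    proof -
      have "finite C" using that finW by (auto intro: finite_subset)
      have "card C = (\<Sum>x\<in>C. 1)" by simp
      also have "\<dots> = (\<Sum>e\<in>f ` C. \<Sum>x\<in>{x \<in> C. f x = e}. 1)" by (rule sum.image_gen[OF \<open>finite C\<close>])
      also have "\<dots> = (\<Sum>e\<in>f ` C. card {x \<in> C. f x = e})" by simp
      finally have "card C = (\<Sum>e\<in>f ` C. card {x \<in> C. f x = e})" .
      also have "\<dots> = (\<Sum>e\<in>f ` C. card (C \<inter> cell e))"
      proof (rule sum.cong)
        fix e assume "e \<in> f ` C"
        hence "e \<in> E" using that unfolding E_def by auto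
        then show "card {x \<in> C. f x = e} = card (C \<inter> cell e)" using fib[OF that] by simp
      qed simp
      finally show ?thesis .
    qed
    have fibcl: "is_clique (cell e) adj (C \<inter> cell e)" if "is_clique W adj C" for C e
      using that unfolding is_clique_def by auto
    have fible: "card (C \<inter> cell e) \<le> w e" if "is_clique W adj C" "e \<in> E" for C e
      using om_facts[OF finite_subset[OF cellW[OF that(2)] finW]] fibcl[OF that(1)] unfolding w_def
      by blast
    have up: "card C \<le> sum w (f ` C) \<and> sum w (f ` C) \<le> \<nu>" if "is_clique W adj C" for C
    proof
      have "C \<subseteq> W" using that unfolding is_clique_def by auto
      hence "f ` C \<subseteq> E" unfolding E_def by auto
      then show "card C \<le> sum w (f ` C)" unfolding cardC[OF \<open>C \<subseteq> W\<close>]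
        using fible[OF that] by (intro sum_mono) auto
      show "sum w (f ` C) \<le> \<nu>" unfolding \<nu>_def using matching_le_Max[OF finE cm[OF that]] .
    qed
    have low: "\<nu> \<le> om W"
    proof -
      have "\<nu> \<in> sum w ` {M. is_matching E M}" unfolding \<nu>_def
        by (rule Max_in[OF finMs]) (use is_matching_def in auto)
      then obtain M where M: "is_matching E M" "sum w M = \<nu>" by auto
      have ME: "M \<subseteq> E" using M unfolding is_matching_def by auto
      have finM: "finite M" using ME finE by (auto intro: finite_subset)
      have "\<forall>e\<in>M. \<exists>K. is_clique (cell e) adj K \<and> card K = w e"
        using om_facts[OF finite_subset[OF cellW finW]] ME unfolding w_def by blast
      then obtain K where K: "\<And>e. e \<in> M \<Longrightarrow> is_clique (cell e) adj (K e) \<and> card (K e) = w e" by metis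
      define C where "C = (\<Union>e\<in>M. K e)"
      have Kc: "K e \<subseteq> cell e" if "e \<in> M" for e using K[OF that] unfolding is_clique_def by auto
      have inK: "x \<in> W \<and> f x = e" if "e \<in> M" "x \<in> K e" for x e
        using Kc that cell_iff ME cellW by blast
      have clC: "is_clique W adj C" unfolding is_clique_def
      proof safe
        fix x assume "x \<in> C" then show "x \<in> W" using inK unfolding C_def by auto
      next
        fix x y assume "x \<in> C" "y \<in> C" "x \<noteq> y"
        then obtain e e' where e: "e \<in> M" "x \<in> K e" "e' \<in> M" "y \<in> K e'" unfolding C_def by auto
        show "adj x y"
        proof (cases "e = e'")
          case True then show ?thesis using K e \<open>x \<noteq> y\<close> unfolding is_clique_def by auto
        next
          case False
          have fx: "x \<in> W" "f x = e" "y \<in> W" "f y = e'" using inK e by auto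
          have "fst e \<noteq> fst e'" "snd e \<noteq> snd e'"
            using M(1) e(1,3) False unfolding is_matching_def by (metis prod.expand)+
          hence "\<not> r1 x y" "\<not> r2 x y" using rowe[OF fx(1) fx(3)] cole[OF fx(1) fx(3)] fx(2,4) unfolding f_def by auto
          then show ?thesis using adjA fx by auto
        qed
      qed
      have "card C = (\<Sum>e\<in>M. card (K e))" unfolding C_def
      proof (rule card_UN_disjoint[OF finM])
        show "\<forall>e\<in>M. finite (K e)"
        proof
          fix e assume e: "e \<in> M"
          hence eE: "e \<in> E" using ME by blast
          show "finite (K e)" by (rule finite_subset[OF Kc[OF e] finite_subset[OF cellW[OF eE] finW]])
        qed
        show "\<forall>e\<in>M. \<forall>e'\<in>M. e \<noteq> e' \<longrightarrow> K e \<inter> K e' = {}"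
        proof (intro ballI impI)
          fix e e' assume e: "e \<in> M" "e' \<in> M" "e \<noteq> e'"
          show "K e \<inter> K e' = {}"
          proof (rule ccontr)
            assume "K e \<inter> K e' \<noteq> {}"
            then obtain x where "x \<in> K e" "x \<in> K e'" by blast
            hence "f x = e" "f x = e'" using inK[OF e(1)] inK[OF e(2)] by auto
            then show False using e(3) by simp
          qed
        qed
      qed
      also have "\<dots> = (\<Sum>e\<in>M. w e)" by (rule sum.cong) (simp_all add: K)
      also have "\<dots> = \<nu>" using M(2) by simp
      finally have cC: "card C = \<nu>" .
      have "card C \<le> om W" using om_facts[OF finW] clC by blast
      then show ?thesis using cC by simp
    qed
    have "\<exists>v. \<forall>M. is_matching E M \<and> sum w M = \<nu> \<longrightarrow> (\<exists>e\<in>M. inc v e)"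
      unfolding \<nu>_def by (rule matching_hit[OF finE neE posw])
    then obtain v where v: "\<forall>M. is_matching E M \<and> sum w M = \<nu> \<longrightarrow> (\<exists>e\<in>M. inc v e)" by blast
    define I where "I = (\<Union>e\<in>{e\<in>E. inc v e}. Ie e)"
    have IW: "I \<subseteq> W"
    proof
      fix x assume "x \<in> I"
      then obtain e where "e \<in> E" "x \<in> Ie e" unfolding I_def by blast
      then show "x \<in> W" using Ie[OF \<open>e \<in> E\<close>] cellW[OF \<open>e \<in> E\<close>] by blast
    qed
    have "indep I" unfolding indep_def
    proof (intro ballI)
      fix x y assume "x \<in> I" "y \<in> I"
      then obtain e e' where e: "e \<in> E" "inc v e" "x \<in> Ie e" "e' \<in> E" "inc v e'" "y \<in> Ie e'"
        unfolding I_def by auto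
      show "\<not> adj x y"
      proof (cases "e = e'")
        case True then show ?thesis using Ie e unfolding indep_def by auto
      next
        case False
        have xc: "x \<in> cell e" "y \<in> cell e'" using Ie[OF e(1)] Ie[OF e(4)] e(3,6) by blast+
        have xW: "x \<in> W" "y \<in> W" using xc cellW e(1,4) by blast+
        have fx: "x \<in> W" "f x = e" "y \<in> W" "f y = e'"
          using xW cell_iff[OF e(1) xW(1)] cell_iff[OF e(4) xW(2)] xc by auto
        have "fst e = fst e' \<and> snd e \<noteq> snd e' \<or> fst e \<noteq> fst e' \<and> snd e = snd e'"
          using e(2,5) False unfolding inc_def by (cases v) (auto simp: prod_eq_iff)
        hence "r1 x y \<noteq> r2 x y" using rowe[OF fx(1) fx(3)] cole[OF fx(1) fx(3)] fx(2,4) unfolding f_def by auto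
        then show ?thesis using adjB fx by auto
      qed
    qed
    moreover have "C \<inter> I \<noteq> {}" if C: "is_clique W adj C" "card C = om W" for C
    proof -
      have CW: "C \<subseteq> W" using C unfolding is_clique_def by auto
      have fCE: "f ` C \<subseteq> E" using CW unfolding E_def by auto
      have finfC: "finite (f ` C)" using fCE finE by (auto intro: finite_subset)
      have eqs: "sum w (f ` C) = \<nu>" using up[OF C(1)] low C(2) by linarith
      have eqc: "card (C \<inter> cell e) = w e" if "e \<in> f ` C" for e
      proof (rule ccontr)
        assume "card (C \<inter> cell e) \<noteq> w e"
        hence "card (C \<inter> cell e) < w e" using fible[OF C(1)] fCE that by (meson le_neq_implies_less subsetD)
        hence "(\<Sum>e\<in>f ` C. card (C \<inter> cell e)) < sum w (f ` C)"
          using sum_strict_mono_ex1[OF finfC, of "\<lambda>e. card (C \<inter> cell e)" w] fible[OF C(1)] fCE that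
          by blast
        then show False using cardC[OF CW] C(2) eqs low up[OF C(1)] by linarith
      qed
      obtain e where e: "e \<in> f ` C" "inc v e" using v cm[OF C(1)] eqs by blast
      have eE: "e \<in> E" using e fCE by auto
      have "(C \<inter> cell e) \<inter> Ie e \<noteq> {}"
        using Ie[OF eE] fibcl[OF C(1)] eqc[OF e(1)] unfolding w_def by blast
      then show ?thesis unfolding I_def using eE e(2) by blast
    qed
    ultimately show ?thesis using IW by blast
  qed
qed

lemma colour:
  assumes "W \<subseteq> L"
  shows "\<exists>f. is_colouring W adj (om W) f"
  using assms
proof (induction "card W" arbitrary: W rule: less_induct)
  case less
  have finW: "finite W" using less.prems finL by (auto intro: finite_subset)
  show ?case
  proof (cases "W = {}")
    case True then show ?thesis unfolding is_colouring_def by auto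
  next
    case False
    obtain I where I: "I \<subseteq> W" "indep I" "\<forall>C. is_clique W adj C \<and> card C = om W \<longrightarrow> C \<inter> I \<noteq> {}"
      using hit[OF less.prems False] by blast
    obtain C0 where C0: "is_clique W adj C0" "card C0 = om W" using om_facts[OF finW] by blast
    have "I \<noteq> {}" using I(3) C0 by auto
    hence lt: "card (W - I) < card W" using I(1) finW
      by (intro psubset_card_mono) auto
    obtain g where g: "is_colouring (W - I) adj (om (W - I)) g"
      using less.hyps[OF lt] less.prems by blast
    have finWI: "finite (W - I)" using finW by simp
    have omlt: "om (W - I) < om W"
    proof -
      obtain C where C: "is_clique (W - I) adj C" "card C = om (W - I)" using om_facts[OF finWI] by blast
      have CW: "is_clique W adj C" using C(1) unfolding is_clique_def by auto
      hence "card C \<le> om W" using om_facts[OF finW] by blast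
      moreover have "card C \<noteq> om W" using I(3) CW C(1) unfolding is_clique_def by blast
      ultimately show ?thesis using C(2) by simp
    qed
    define h where "h x = (if x \<in> I then om W - 1 else g x)" for x
    have gb: "g x < om (W - I)" if "x \<in> W" "x \<notin> I" for x
      using g that unfolding is_colouring_def by auto
    have gd: "g x \<noteq> g y" if "x \<in> W" "x \<notin> I" "y \<in> W" "y \<notin> I" "x \<noteq> y" "adj x y" for x y
      using g that unfolding is_colouring_def by auto
    have "is_colouring W adj (om W) h"
      unfolding is_colouring_def
    proof (intro conjI ballI impI)
      fix x assume "x \<in> W" then show "h x < om W"
        using gb[of x] omlt unfolding h_def by (cases "x \<in> I") auto
    next
      fix x y assume x: "x \<in> W" and y: "y \<in> W" and xy: "x \<noteq> y \<and> adj x y"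
      show "h x \<noteq> h y"
      proof (cases "x \<in> I"; cases "y \<in> I")
        assume "x \<in> I" "y \<in> I" then show ?thesis using I(2) xy unfolding indep_def by auto
      next
        assume "x \<in> I" "y \<notin> I" then show ?thesis using gb[OF y] omlt unfolding h_def by auto
      next
        assume "x \<notin> I" "y \<in> I" then show ?thesis using gb[OF x] omlt unfolding h_def by auto
      next
        assume "x \<notin> I" "y \<notin> I" then show ?thesis using gd[OF x _ y] xy unfolding h_def by auto
      qed
    qed
    then show ?thesis by blast
  qed
qed

lemma perfect: "perfect_graph L adj"
  unfolding perfect_graph_def
proof (intro conjI allI impI)
  show "finite L" by (rule finL)
  fix W assume WL: "W \<subseteq> L"
  have finW: "finite W" using WL finL by (auto intro: finite_subset)
  show "chromatic_number W adj = om W"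
    unfolding chromatic_number_def
  proof (rule Least_equality)
    show "\<exists>f. is_colouring W adj (om W) f" by (rule colour[OF WL])
  next
    fix k assume "\<exists>f. is_colouring W adj k f"
    then obtain f where f: "is_colouring W adj k f" by blast
    obtain C where C: "is_clique W adj C" "card C = om W" using om_facts[OF finW] by blast
    have "inj_on f C"
    proof (rule inj_onI)
      fix x y assume "x \<in> C" "y \<in> C" "f x = f y"
      show "x = y"
      proof (rule ccontr)
        assume "x \<noteq> y"
        hence "adj x y" using C(1) \<open>x \<in> C\<close> \<open>y \<in> C\<close> unfolding is_clique_def by blast
        moreover have "x \<in> W" "y \<in> W" using C(1) \<open>x \<in> C\<close> \<open>y \<in> C\<close> unfolding is_clique_def by blast+
        ultimately have "f x \<noteq> f y" using f \<open>x \<noteq> y\<close> unfolding is_colouring_def by blast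
        then show False using \<open>f x = f y\<close> by simp
      qed
    qed
    hence "card C = card (f ` C)" by (simp add: card_image)
    also have "\<dots> \<le> card {..<k}"
    proof (rule card_mono)
      show "f ` C \<subseteq> {..<k}"
      proof
        fix z assume "z \<in> f ` C"
        then obtain x where "x \<in> C" "z = f x" by blast
        moreover have "x \<in> W" using C(1) \<open>x \<in> C\<close> unfolding is_clique_def by blast
        ultimately show "z \<in> {..<k}" using f unfolding is_colouring_def by simp
      qed
    qed simp
    finally show "om W \<le> k" using C(2) by simp
  qed
qed

end


theorem proposition4:
  assumes "relaxed_scenario VT ET rT VS ES rS \<sigma> \<mu> \<tau>T \<tau>S"
  shows "perfect_graph (leaves VT ET) (edt_adj VT ET VS ES \<sigma> \<tau>T \<tau>S)"
proof -
  have TT: "planted_phylo_tree VT ET rT" and TS: "planted_phylo_tree VS ES rS"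
    and tmT: "time_map VT ET \<tau>T" and tmS: "time_map VS ES \<tau>S"
    and sig: "\<forall>x\<in>leaves VT ET. \<sigma> x \<in> leaves VS ES"
    using assms unfolding relaxed_scenario_def by auto
  have LV: "leaves VT ET \<subseteq> VT" unfolding leaves_def by auto
  have LS: "leaves VS ES \<subseteq> VS" unfolding leaves_def by auto
  have finL: "finite (leaves VT ET)" using TT LV unfolding planted_phylo_tree_def by (auto intro: finite_subset)
  have sV: "\<sigma> x \<in> VS" if "x \<in> leaves VT ET" for x using sig that LS by blast
  interpret U: ultra2 "leaves VT ET" "\<lambda>x y. \<tau>T (lca VT ET x y)" "\<lambda>x y. \<tau>S (lca VS ES (\<sigma> x) (\<sigma> y))"
  proof
    show "finite (leaves VT ET)" by (rule finL)
  next
    fix x y show "\<tau>T (lca VT ET x y) = \<tau>T (lca VT ET y x)" by (simp add: lca_sym[of VT ET x y])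
  next
    fix x y show "\<tau>S (lca VS ES (\<sigma> x) (\<sigma> y)) = \<tau>S (lca VS ES (\<sigma> y) (\<sigma> x))"
      by (simp add: lca_sym[of VS ES "\<sigma> x" "\<sigma> y"])
  next
    fix x y z assume "x \<in> leaves VT ET" "y \<in> leaves VT ET" "z \<in> leaves VT ET"
    then show "\<tau>T (lca VT ET x z) \<le> max (\<tau>T (lca VT ET x y)) (\<tau>T (lca VT ET y z))"
      using lca_ultra[OF TT tmT] LV by blast
  next
    fix x y z assume "x \<in> leaves VT ET" "y \<in> leaves VT ET" "z \<in> leaves VT ET"
    then show "\<tau>S (lca VS ES (\<sigma> x) (\<sigma> z)) \<le> max (\<tau>S (lca VS ES (\<sigma> x) (\<sigma> y))) (\<tau>S (lca VS ES (\<sigma> y) (\<sigma> z)))"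
      using lca_ultra[OF TS tmS] sV by blast
  qed
  have "edt_adj VT ET VS ES \<sigma> \<tau>T \<tau>S = U.adj"
    by (intro ext) (simp add: edt_adj_def U.adj_def)
  then show ?thesis using U.perfect by simp
qed

end
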